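(* Let $(g;\Gamma)$ be a solution of the $(1,2)$-AlgDOP problem over $\mathbb{C}$ which cannot be reduced to a solution of the $(1,1)$-AlgDOP problem by a $(1,2)$-admissible change of variables, and suppose $\Gamma=y(y-p_1(x))(y-p_2(x))$ for polynomials $p_1,p_2$. Then the polynomial $p_1p_2$ has at most two distinct complex roots.
   Context: For positive reals $\mathbf w=(w_1,\dots,w_d)$, $\deg_{\mathbf w}(\sum_k a_kx^k)=\max_{a_k\ne0}\sum_i w_ik_i$, and $\mathcal P_{\mathbf w}(n;\mathbb K)$ denotes polynomials over $\mathbb K$ of $\mathbf w$-degree $\le n$. A solution of the $\mathbf w$-AlgDOP problem over $\mathbb K$ is a pair $(g,\Gamma)$, $g=(g^{ij})$ a symmetric matrix of polynomials, $\Gamma$ a polynomial, with (A1) $g^{ij}\in\mathcal P_{\mathbf w}(w_i+w_j;\mathbb K)$; (A2) $\det g\not\equiv0$ and $\Gamma$ is a square-free factor of $\det g$; (A3) $\Gamma$ divides $\sum_j g^{ij}\partial_j\Gamma$ for each $i$. In dimension 2: variables $(x,y)$, $\mathbf w=(1,w)$. A $(1,2)$-admissible change of variables is $\Phi:(x,y)\mapsto(\alpha x+\beta,\gamma y+p(x))$ with $\alpha\gamma\ne0$, $\deg p\le2$; it maps $(g,\Gamma)$ to $(\Phi_*g,\Gamma\circ\Phi^{-1})$, $\Phi_*g$ the pushforward as a contravariant 2-tensor. *)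

theory Defs
  imports Complex_Main "HOL-Computational_Algebra.Polynomial" "HOL-Computational_Algebra.Squarefree"
begin

text \<open>Bivariate polynomials in (x,y) over the complex numbers are represented as
  polynomials in the outer variable y whose coefficients are polynomials in x:
  f = sum_j (coeff f j)(x) * y^j.\<close>

type_synonym bpoly = "complex poly poly"

definition Dx :: "bpoly \<Rightarrow> bpoly" where
  "Dx f = map_poly pderiv f"

definition Dy :: "bpoly \<Rightarrow> bpoly" where
  "Dy f = pderiv f"

definition in_Pw :: "nat \<Rightarrow> nat \<Rightarrow> bpoly \<Rightarrow> bool" where
  "in_Pw w n f \<longleftrightarrow>
     (\<forall>i j. coeff (coeff f j) i \<noteq> 0 \<longrightarrow> i + w * j \<le> n)"

text \<open>Solution of the (1,w)-AlgDOP problem over C. The symmetric matrix g is given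
  by its entries g^{11} = a, g^{12} = g^{21} = b, g^{22} = c.\<close>

definition algdop :: "nat \<Rightarrow> bpoly \<Rightarrow> bpoly \<Rightarrow> bpoly \<Rightarrow> bpoly \<Rightarrow> bool" where
  "algdop w a b c \<Gamma> \<longleftrightarrow>
     in_Pw w 2 a \<and> in_Pw w (1 + w) b \<and> in_Pw w (2 * w) c \<and>
     a * c - b * b \<noteq> 0 \<and> squarefree \<Gamma> \<and> \<Gamma> dvd (a * c - b * b) \<and>
     \<Gamma> dvd (a * Dx \<Gamma> + b * Dy \<Gamma>) \<and> \<Gamma> dvd (b * Dx \<Gamma> + c * Dy \<Gamma>)"

text \<open>Composition f(A(x), B(x,y)) with A univariate in x and B bivariate.\<close>

definition bcomp :: "bpoly \<Rightarrow> complex poly \<Rightarrow> bpoly \<Rightarrow> bpoly" where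
  "bcomp f A B = pcompose (map_poly (\<lambda>q. pcompose q A) f) B"

text \<open>The inverse of Phi(x,y) = (alpha x + beta, gamma y + p(x)) is
  (u,v) |-> ((u - beta)/alpha, (v - p((u - beta)/alpha))/gamma).\<close>

definition inv_x :: "complex \<Rightarrow> complex \<Rightarrow> complex poly" where
  "inv_x \<alpha> \<beta> = [:- \<beta> / \<alpha>, 1 / \<alpha>:]"

definition inv_y :: "complex \<Rightarrow> complex \<Rightarrow> complex \<Rightarrow> complex poly \<Rightarrow> bpoly" where
  "inv_y \<alpha> \<beta> \<gamma> p = [: smult (- 1 / \<gamma>) (pcompose p (inv_x \<alpha> \<beta>)), [: 1 / \<gamma> :] :]"

definition comp_inv :: "complex \<Rightarrow> complex \<Rightarrow> complex \<Rightarrow> complex poly \<Rightarrow> bpoly \<Rightarrow> bpoly" where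
  "comp_inv \<alpha> \<beta> \<gamma> p f = bcomp f (inv_x \<alpha> \<beta>) (inv_y \<alpha> \<beta> \<gamma> p)"

definition admissible12 :: "complex \<Rightarrow> complex \<Rightarrow> complex \<Rightarrow> complex poly \<Rightarrow> bool" where
  "admissible12 \<alpha> \<beta> \<gamma> p \<longleftrightarrow> \<alpha> * \<gamma> \<noteq> 0 \<and> degree p \<le> 2"

text \<open>Pushforward of the contravariant 2-tensor g under Phi: with Jacobian
  J = [[alpha, 0], [p'(x), gamma]], Phi_* g = (J g J^T) o Phi^{-1}.\<close>

definition push_a :: "complex \<Rightarrow> complex \<Rightarrow> complex \<Rightarrow> complex poly \<Rightarrow> bpoly \<Rightarrow> bpoly \<Rightarrow> bpoly \<Rightarrow> bpoly" where
  "push_a \<alpha> \<beta> \<gamma> p a b c = comp_inv \<alpha> \<beta> \<gamma> p (smult [:\<alpha>^2:] a)"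

definition push_b :: "complex \<Rightarrow> complex \<Rightarrow> complex \<Rightarrow> complex poly \<Rightarrow> bpoly \<Rightarrow> bpoly \<Rightarrow> bpoly \<Rightarrow> bpoly" where
  "push_b \<alpha> \<beta> \<gamma> p a b c =
     comp_inv \<alpha> \<beta> \<gamma> p (smult [:\<alpha>:] ([:pderiv p:] * a + smult [:\<gamma>:] b))"

definition push_c :: "complex \<Rightarrow> complex \<Rightarrow> complex \<Rightarrow> complex poly \<Rightarrow> bpoly \<Rightarrow> bpoly \<Rightarrow> bpoly \<Rightarrow> bpoly" where
  "push_c \<alpha> \<beta> \<gamma> p a b c =
     comp_inv \<alpha> \<beta> \<gamma> p ([:pderiv p:]^2 * a + smult [:2 * \<gamma>:] ([:pderiv p:] * b)
                        + smult [:\<gamma>^2:] c)"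

definition reducible_to_11 :: "bpoly \<Rightarrow> bpoly \<Rightarrow> bpoly \<Rightarrow> bpoly \<Rightarrow> bool" where
  "reducible_to_11 a b c \<Gamma> \<longleftrightarrow>
     (\<exists>\<alpha> \<beta> \<gamma> p. admissible12 \<alpha> \<beta> \<gamma> p \<and>
        algdop 1 (push_a \<alpha> \<beta> \<gamma> p a b c) (push_b \<alpha> \<beta> \<gamma> p a b c) (push_c \<alpha> \<beta> \<gamma> p a b c)
                 (comp_inv \<alpha> \<beta> \<gamma> p \<Gamma>))"

end

theory Submission
  imports Defs
begin

lemma deglin: "p \<noteq> 0 \<Longrightarrow> degree ([:a, 1:] * p) = Suc (degree p)"
  for p :: "complex poly"
  by (subst degree_mult_eq) auto

lemma deglin2: "p \<noteq> 0 \<Longrightarrow> degree ([:a, 1:] * ([:b,1:] * p)) = Suc (Suc (degree p))"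
  for p :: "complex poly"
proof -
  assume p: "p \<noteq> 0"
  have "[:b,1:] * p \<noteq> 0" using p by (metis mult_eq_0_iff pCons_eq_0_iff zero_neq_one)
  thus ?thesis using deglin[OF p, of b] deglin[of "[:b,1:] * p" a] by simp
qed

lemma key:
  fixes A L Q p1 p2 :: "complex poly" and a3 c2 :: complex
  assumes dA: "degree A \<le> 2" and dL: "degree L \<le> 1" and dQ: "degree Q \<le> 2"
    and nz1: "p1 \<noteq> 0" and nz2: "p2 \<noteq> 0" and ne: "p1 \<noteq> p2" and a3: "a3 \<noteq> 0" and c2: "c2 \<noteq> 0"
    and E1: "L * p1 = (A + [:a3:] * p1) * pderiv p1"
    and E2a: "Q + smult c2 p1 = L * pderiv p1"
    and E2b: "Q + smult c2 p2 = L * pderiv p2"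
    and E3: "A * Q = smult (a3*c2) (p1*p2)"
    and E4: "smult c2 A + smult a3 Q - L*L = - smult (a3*c2) (p1+p2)"
  shows "card {z. poly p1 z = 0} \<le> 1"
proof -
  have k: "a3 * c2 \<noteq> 0" using a3 c2 by simp
  have deg: "degree p1 \<le> 2"
  proof (rule ccontr)
    assume "\<not> degree p1 \<le> 2"
    hence g3: "degree p1 \<ge> 3" by simp
    have "degree (smult c2 A + smult a3 Q - L*L) \<le> 2"
    proof -
      have "degree (L*L) \<le> 2" using degree_mult_le[of L L] dL by simp
      moreover have "degree (smult c2 A) \<le> 2" using dA degree_smult_le[of c2 A] by simp
      moreover have "degree (smult a3 Q) \<le> 2" using dQ degree_smult_le[of a3 Q] by simp
      ultimately show ?thesis
        by (meson degree_add_le degree_diff_le)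
    qed
    hence s2: "degree (p1 + p2) \<le> 2" using E4 k by simp
    have "degree (A * Q) \<le> 4" using degree_mult_le[of A Q] dA dQ by simp
    hence "degree (p1*p2) \<le> 4" using E3 k by simp
    hence "degree p1 + degree p2 \<le> 4" using degree_mult_eq[OF nz1 nz2] by simp
    hence "degree p2 < degree p1" using g3 by simp
    hence "degree (p1 + p2) = degree p1" by (rule degree_add_eq_left)
    thus False using s2 g3 by simp
  qed
  have fin: "finite {z. poly p1 z = 0}" using poly_roots_finite[OF nz1] .
  have "\<forall>r\<in>{z. poly p1 z = 0}. \<forall>s\<in>{z. poly p1 z = 0}. r = s"
  proof (intro ballI, rule ccontr)
    fix r s assume r: "r \<in> {z. poly p1 z = 0}" and s: "s \<in> {z. poly p1 z = 0}" and rs: "r \<noteq> s"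
    from r obtain q where q: "p1 = [:-r,1:] * q" using poly_eq_0_iff_dvd by (metis dvdE mem_Collect_eq)
    have "poly q s = 0" using s rs q by simp
    then obtain q' where q': "q = [:-s,1:] * q'" using poly_eq_0_iff_dvd by (metis dvdE)
    have "q' \<noteq> 0" using nz1 q q' by auto
    hence "degree p1 = 2 + degree q'" unfolding q q' using deglin2[of q' "-r" "-s"] by simp
    hence "degree q' = 0" using deg by simp
    then obtain u where u: "q' = [:u:]" by (metis degree_eq_zeroE)
    define R where "R = [:-r,1:] * [:-s,1:]"
    have p1R: "p1 = smult u R" using q q' u R_def by (simp add: algebra_simps)
    have u0: "u \<noteq> 0" using nz1 p1R by auto
    have dp1: "pderiv p1 = smult u [:-(r+s), 2:]" using p1R R_def
      by (simp add: pderiv_smult pderiv_mult pderiv_pCons algebra_simps)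
    have Ar: "poly A r = 0"
    proof -
      have "poly (L * p1) r = poly ((A + [:a3:] * p1) * pderiv p1) r" using E1 by simp
      hence "poly A r * (u * (r - s)) = 0" using r dp1 by (simp add: algebra_simps) (metis mult_eq_0_iff)
      thus ?thesis using u0 rs by simp
    qed
    have As: "poly A s = 0"
    proof -
      have "poly (L * p1) s = poly ((A + [:a3:] * p1) * pderiv p1) s" using E1 by simp
      hence "poly A s * (u * (s - r)) = 0" using s dp1 by (simp add: algebra_simps) (metis mult_eq_0_iff)
      thus ?thesis using u0 rs by simp
    qed
    from Ar obtain A1 where A1: "A = [:-r,1:] * A1" using poly_eq_0_iff_dvd by (metis dvdE)
    have "poly A1 s = 0" using As rs A1 by simp
    then obtain A2 where A2: "A1 = [:-s,1:] * A2" using poly_eq_0_iff_dvd by (metis dvdE)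
    have "degree A2 = 0"
    proof (cases "A2 = 0")
      case True thus ?thesis by simp
    next
      case False
      thus "degree A2 = 0" using dA unfolding A1 A2 using deglin2[of A2 "-r" "-s"] by simp
    qed
    then obtain m where m: "A2 = [:m:]" by (metis degree_eq_zeroE)
    define \<mu> where "\<mu> = m / u"
    have AR: "A = smult \<mu> p1" using A1 A2 m p1R u0 R_def \<mu>_def by (simp add: algebra_simps)
    define \<nu> where "\<nu> = \<mu> + a3"
    have "p1 * L = p1 * smult \<nu> (pderiv p1)" using E1 AR \<nu>_def
      by (simp add: algebra_simps smult_add_left)
    hence L: "L = smult \<nu> (pderiv p1)" using nz1 by (metis mult_left_cancel mult_smult_right)
    have nu: "\<nu> \<noteq> 0"
    proof
      assume "\<nu> = 0"
      hence "L = 0" using L by simp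
      hence "smult c2 p1 = smult c2 p2" using E2a E2b by (metis add_left_cancel mult_zero_left)
      hence "smult (inverse c2) (smult c2 p1) = smult (inverse c2) (smult c2 p2)" by simp
      thus False using c2 ne by simp
    qed
    have "p1 * smult \<mu> Q = p1 * smult (a3*c2) p2" using E3 AR by (simp add: algebra_simps)
    hence p2Q: "smult \<mu> Q = smult (a3*c2) p2" using nz1 by (metis mult_left_cancel mult_smult_right)
    define x0 where "x0 = (r+s)/2"
    have Lx0: "poly L x0 = 0" using L dp1 x0_def by (simp add: algebra_simps)
    have e1: "poly Q x0 + c2 * poly p1 x0 = 0" using arg_cong[OF E2a, of "\<lambda>f. poly f x0"] Lx0 by simp
    have e2: "poly Q x0 + c2 * poly p2 x0 = 0" using arg_cong[OF E2b, of "\<lambda>f. poly f x0"] Lx0 by simp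
    have e3: "\<mu> * poly Q x0 = a3 * c2 * poly p2 x0" using arg_cong[OF p2Q, of "\<lambda>f. poly f x0"] by simp
    have "a3 * poly Q x0 + \<mu> * poly Q x0 = 0"
    proof -
      have "a3 * (poly Q x0 + c2 * poly p2 x0) = 0" using e2 by simp
      thus ?thesis using e3 by (simp add: algebra_simps)
    qed
    hence "\<nu> * poly Q x0 = 0" using \<nu>_def by (simp add: algebra_simps)
    hence "poly Q x0 = 0" using nu by simp
    hence "poly p1 x0 = 0" using e1 c2 by simp
    moreover have "poly p1 x0 = - u * ((r - s)/2)^2" unfolding p1R R_def x0_def
      by (simp add: field_simps power2_eq_square)
    ultimately show False using u0 rs by simp
  qed
  thus ?thesis using card_le_Suc0_iff_eq[OF fin] by simp
qed


lemma Pw_zero: "in_Pw w n f \<Longrightarrow> i + w * j > n \<Longrightarrow> coeff (coeff f j) i = 0"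
  unfolding in_Pw_def by (meson not_le)

lemma Pw_zero_row: "in_Pw w n f \<Longrightarrow> w * j > n \<Longrightarrow> coeff f j = 0"
  by (rule poly_eqI) (simp add: Pw_zero)

lemma not_unit_lin: "\<not> is_unit ([:c, 1:] :: complex poly poly)"
proof
  assume "is_unit ([:c, 1:] :: complex poly poly)"
  hence "degree ([:c, 1:] :: complex poly poly) \<le> degree (1 :: complex poly poly)"
    by (intro dvd_imp_degree_le) auto
  thus False by simp
qed

lemma sq_not_sqf: "\<Gamma> = x * x * y \<Longrightarrow> squarefree \<Gamma> \<Longrightarrow> \<not> is_unit x \<Longrightarrow> False"
  unfolding squarefree_def by (metis dvd_triv_left power2_eq_square)

lemma evG:
  fixes p1 p2 :: "complex poly"
  shows "poly (Dx [:0, p1*p2, -(p1+p2), 1:]) p1 = - (p1 * pderiv p1 * (p1 - p2))"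
    and "poly (Dy [:0, p1*p2, -(p1+p2), 1:]) p1 = p1 * (p1 - p2)"
  by (simp_all add: Dx_def Dy_def map_poly_pCons pderiv_mult pderiv_pCons pderiv_diff pderiv_minus pderiv_add algebra_simps power2_eq_square)

theorem lemma5p6:
  fixes a b c \<Gamma> :: bpoly and p1 p2 :: "complex poly"
  assumes "algdop 2 a b c \<Gamma>"
    and "\<not> reducible_to_11 a b c \<Gamma>"
    and "\<Gamma> = [:0, 1:] * [:- p1, 1:] * [:- p2, 1:]"
  shows "finite {z. poly (p1 * p2) z = 0} \<and> card {z. poly (p1 * p2) z = 0} \<le> 2"
proof -
  note alg = assms(1)[unfolded algdop_def]
  have Pa: "in_Pw 2 2 a" and Pc: "in_Pw 2 4 c" using alg by auto
  have Pb: "in_Pw 2 3 b" using alg by (auto simp: numeral_3_eq_3)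
  have det0: "a * c - b * b \<noteq> 0" and sqf: "squarefree \<Gamma>" and ddet: "\<Gamma> dvd (a * c - b * b)"
    and inv1: "\<Gamma> dvd (a * Dx \<Gamma> + b * Dy \<Gamma>)" and inv2: "\<Gamma> dvd (b * Dx \<Gamma> + c * Dy \<Gamma>)"
    using alg by auto
  define A where "A = coeff a 0"
  define a3 where "a3 = coeff (coeff a 1) 0"
  define B where "B = coeff b 0"
  define L where "L = coeff b 1"
  define C where "C = coeff c 0"
  define Q where "Q = coeff c 1"
  define c2 where "c2 = coeff (coeff c 2) 0"
  have a_eq: "a = [:A, [:a3:]:]"
  proof (rule poly_eqI)
    fix n show "coeff a n = coeff [:A, [:a3:]:] n"
    proof (cases n)
      case 0 thus ?thesis by (simp add: A_def)
    next
      case (Suc m)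
      show ?thesis
      proof (cases m)
        case 0
        have "coeff a 1 = [:a3:]"
          by (rule poly_eqI) (auto simp: a3_def coeff_pCons Pw_zero[OF Pa] split: nat.split)
        thus ?thesis using Suc 0 by simp
      next
        case (Suc m') thus ?thesis using \<open>n = Suc m\<close> Pw_zero_row[OF Pa] by simp
      qed
    qed
  qed
  have dA: "degree A \<le> 2" unfolding A_def by (rule degree_le) (auto intro: Pw_zero[OF Pa])
  have b_eq: "b = [:B, L:]"
  proof (rule poly_eqI)
    fix n show "coeff b n = coeff [:B, L:] n"
      using Pw_zero_row[OF Pb, of n] by (cases n; cases "n - 1") (auto simp: B_def L_def)
  qed
  have dL: "degree L \<le> 1" unfolding L_def by (rule degree_le) (auto intro: Pw_zero[OF Pb])
  have c_eq: "c = [:C, Q, [:c2:]:]"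
  proof (rule poly_eqI)
    fix n show "coeff c n = coeff [:C, Q, [:c2:]:] n"
    proof (cases "n \<ge> 3")
      case True
      have "degree [:C, Q, [:c2:]:] \<le> 2" by (simp add: degree_pCons_le)
      hence "coeff [:C, Q, [:c2:]:] n = 0" using True by (intro coeff_eq_0) simp
      thus ?thesis using Pw_zero_row[OF Pc, of n] True by simp
    next
      case False
      hence "n = 0 \<or> n = 1 \<or> n = 2" by auto
      moreover have "coeff c 2 = [:c2:]"
        by (rule poly_eqI) (auto simp: c2_def coeff_pCons Pw_zero[OF Pc] split: nat.split)
      ultimately show ?thesis by (auto simp: C_def Q_def numeral_2_eq_2)
    qed
  qed
  have dQ: "degree Q \<le> 2" unfolding Q_def by (rule degree_le) (auto intro: Pw_zero[OF Pc])
  define G where "G = [:0, p1*p2, -(p1+p2), 1:]"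
  have GG: "\<Gamma> = G" unfolding assms(3) G_def by (simp add: algebra_simps)
  have GG2: "\<Gamma> = [:0, p2*p1, -(p2+p1), 1:]" unfolding GG G_def by (simp add: algebra_simps)
  have nz1: "p1 \<noteq> 0"
  proof
    assume "p1 = 0"
    hence "\<Gamma> = [:0,1:] * [:0,1:] * [:-p2,1:]" using assms(3) by simp
    thus False using sq_not_sqf sqf not_unit_lin by blast
  qed
  have nz2: "p2 \<noteq> 0"
  proof
    assume "p2 = 0"
    hence "\<Gamma> = [:0,1:] * [:0,1:] * [:-p1,1:]" using assms(3) by (simp add: algebra_simps)
    thus False using sq_not_sqf sqf not_unit_lin by blast
  qed
  have ne: "p1 \<noteq> p2"
  proof
    assume "p1 = p2"
    hence "\<Gamma> = [:-p1,1:] * [:-p1,1:] * [:0,1:]" using assms(3) by (simp add: algebra_simps)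
    thus False using sq_not_sqf sqf not_unit_lin by blast
  qed
  have fac: "[:-q,1:] dvd \<Gamma>" if "q = 0 \<or> q = p1 \<or> q = p2" for q
    using that unfolding assms(3)
    by (elim disjE) (metis dvd_mult2 dvd_mult dvd_refl minus_zero)+
  have r1: "poly X q = 0" if "\<Gamma> dvd X" "q = 0 \<or> q = p1 \<or> q = p2" for X q
    using fac[OF that(2)] that(1) poly_eq_0_iff_dvd dvd_trans by blast
  have pp: "p1 * p2 \<noteq> 0" using nz1 nz2 by simp
  have "poly (a * Dx \<Gamma> + b * Dy \<Gamma>) 0 = 0" using r1[OF inv1] by simp
  hence "B * (p1 * p2) = 0" unfolding a_eq b_eq GG G_def by (auto simp add: Dx_def Dy_def map_poly_pCons pderiv_pCons)
  hence B0: "B = 0" using pp by simp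
  have "poly (b * Dx \<Gamma> + c * Dy \<Gamma>) 0 = 0" using r1[OF inv2] by simp
  hence "C * (p1 * p2) = 0" unfolding b_eq c_eq GG G_def by (auto simp add: Dx_def Dy_def map_poly_pCons pderiv_pCons)
  hence C0: "C = 0" using pp by simp
  have d1: "p1 - p1 \<noteq> p2 - p1" "p1 - p2 \<noteq> 0" "p2 - p1 \<noteq> 0" using ne by auto
  have E1: "L * p1 = (A + [:a3:] * p1) * pderiv p1"
  proof -
    have "poly (a * Dx \<Gamma> + b * Dy \<Gamma>) p1 = 0" using r1[OF inv1] by simp
    hence "p1 * (p1 - p2) * (L * p1 - (A + [:a3:] * p1) * pderiv p1) = 0"
      unfolding GG G_def poly_add poly_mult evG unfolding a_eq b_eq B0 by (simp add: algebra_simps)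
    thus ?thesis using nz1 d1 by simp
  qed
  have E1b: "L * p2 = (A + [:a3:] * p2) * pderiv p2"
  proof -
    have "poly (a * Dx \<Gamma> + b * Dy \<Gamma>) p2 = 0" using r1[OF inv1] by simp
    hence "p2 * (p2 - p1) * (L * p2 - (A + [:a3:] * p2) * pderiv p2) = 0"
      unfolding GG2 poly_add poly_mult evG unfolding a_eq b_eq B0 by (simp add: algebra_simps)
    thus ?thesis using nz2 d1 by simp
  qed
  have E2a: "Q + smult c2 p1 = L * pderiv p1"
  proof -
    have "poly (b * Dx \<Gamma> + c * Dy \<Gamma>) p1 = 0" using r1[OF inv2] by simp
    hence "p1 * (p1 * (p1 - p2) * (Q + smult c2 p1 - L * pderiv p1)) = 0"
      unfolding GG G_def poly_add poly_mult evG unfolding c_eq b_eq B0 C0 by (simp add: algebra_simps)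
    thus ?thesis using nz1 d1 by simp
  qed
  have E2b: "Q + smult c2 p2 = L * pderiv p2"
  proof -
    have "poly (b * Dx \<Gamma> + c * Dy \<Gamma>) p2 = 0" using r1[OF inv2] by simp
    hence "p2 * (p2 * (p2 - p1) * (Q + smult c2 p2 - L * pderiv p2)) = 0"
      unfolding GG2 poly_add poly_mult evG unfolding c_eq b_eq B0 C0 by (simp add: algebra_simps)
    thus ?thesis using nz2 d1 by simp
  qed
  have detE: "a * c - b * b = [:0, A * Q, smult c2 A + smult a3 Q - L * L, [:a3 * c2:]:]"
    unfolding a_eq b_eq c_eq B0 C0 by (simp add: algebra_simps)
  obtain h where h: "a * c - b * b = \<Gamma> * h" using ddet by (elim dvdE)
  have hnz: "h \<noteq> 0" using h det0 by auto
  have "degree (a * c - b * b) \<le> 3" unfolding detE by (simp add: degree_pCons_le)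
  moreover have "degree (\<Gamma> * h) = 3 + degree h" using hnz unfolding GG G_def
    by (subst degree_mult_eq) auto
  ultimately have "degree h = 0" using h by simp
  then obtain h0 where h0: "h = [:h0:]" by (metis degree_eq_zeroE)
  have "[:0, A * Q, smult c2 A + smult a3 Q - L * L, [:a3 * c2:]:] = smult h0 G"
    using h unfolding detE h0 GG by simp
  hence H: "A * Q = h0 * (p1 * p2)" "smult c2 A + smult a3 Q - L * L = - (h0 * (p1 + p2))"
    "[:a3 * c2:] = h0" unfolding G_def by (simp_all add: algebra_simps)
  have k: "a3 * c2 \<noteq> 0" using det0 H(3) h h0 by auto
  hence a3: "a3 \<noteq> 0" and c2: "c2 \<noteq> 0" by auto
  have E3: "A * Q = smult (a3*c2) (p1*p2)" using H by auto
  have E4: "smult c2 A + smult a3 Q - L*L = - smult (a3*c2) (p1+p2)" using H by auto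
  have k1: "card {z. poly p1 z = 0} \<le> 1"
    by (rule key[OF dA dL dQ nz1 nz2 ne a3 c2 E1 E2a E2b E3 E4])
  have k2: "card {z. poly p2 z = 0} \<le> 1"
    by (rule key[OF dA dL dQ nz2 nz1 ne[symmetric] a3 c2 E1b E2b E2a])
       (use E3 E4 in \<open>simp_all add: algebra_simps\<close>)
  have U: "{z. poly (p1 * p2) z = 0} = {z. poly p1 z = 0} \<union> {z. poly p2 z = 0}" by auto
  have f: "finite {z. poly (p1 * p2) z = 0}" using poly_roots_finite[OF pp] .
  have "card {z. poly (p1 * p2) z = 0} \<le> card {z. poly p1 z = 0} + card {z. poly p2 z = 0}"
    unfolding U by (rule card_Un_le)
  thus ?thesis using f k1 k2 by simp
qed

end
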